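(* Let $p$ be a prime, $r\geq 1$ and $d\geq 0$. Then $$\sum_{\lambda\in\mathrm{Par}(d)}\Big(\sum_{i=0}^{r-1}l(\lambda^{(i)})+d_p(\lambda^{(r-1)})\Big)=l(d).$$
   Context: $\mathrm{Par}(d)$ is the set of partitions of $d$; $m_n(\lambda)$ denotes the multiplicity of the part $n$ in $\lambda$, $l(\lambda)$ the number of parts, and $l(d)=\sum_{\lambda\in\mathrm{Par}(d)}l(\lambda)$. The $p$-adic decomposition of $\lambda$ is $\lambda=\lambda^{(0)}+p\lambda^{(1)}+p^2\lambda^{(2)}+\cdots$, where each $\lambda^{(i)}$ is a partition with no part divisible by $p$, determined by $m_n(\lambda^{(i)})=m_{p^in}(\lambda)$ for all $n$ with $p\nmid n$ (so $\lambda^{(i)}$ consists of the parts of $\lambda$ of $p$-adic valuation exactly $i$, divided by $p^i$). For an integer $a\geq0$, $d_p(a)=\sum_{j\geq1}\lfloor a/p^j\rfloor$, and for a partition $\mu$, $d_p(\mu)=\sum_{n\geq1}d_p(m_n(\mu))$. *)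

theory Defs
  imports Main "HOL-Library.Multiset" "HOL-Computational_Algebra.Primes"
begin

definition Par :: "nat \<Rightarrow> nat multiset set" where
  "Par d = {la. (\<forall>n\<in>#la. 0 < n) \<and> sum_mset la = d}"

definition mult_part :: "nat \<Rightarrow> nat multiset \<Rightarrow> nat" where
  "mult_part n la = count la n"

definition len :: "nat multiset \<Rightarrow> nat" where
  "len la = size la"

definition len_total :: "nat \<Rightarrow> nat" where
  "len_total d = (\<Sum>la\<in>Par d. len la)"

definition padic_comp :: "nat \<Rightarrow> nat \<Rightarrow> nat multiset \<Rightarrow> nat multiset" where
  "padic_comp p i la =
     image_mset (\<lambda>n. n div p ^ i) (filter_mset (\<lambda>n. multiplicity p n = i) la)"

text \<open>d_p(a) = sum over j >= 1 of floor(a / p^j); only finitely many terms are nonzero.\<close>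
definition dp_nat :: "nat \<Rightarrow> nat \<Rightarrow> nat" where
  "dp_nat p a = (\<Sum>j\<in>{j. 1 \<le> j \<and> 0 < a div p ^ j}. a div p ^ j)"

definition dp_part :: "nat \<Rightarrow> nat multiset \<Rightarrow> nat" where
  "dp_part p \<mu> = (\<Sum>n\<in>set_mset \<mu>. dp_nat p (mult_part n \<mu>))"

end

theory Submission
  imports Defs
begin

lemma mem_le_sum: "(x::nat) \<in># M \<Longrightarrow> x \<le> sum_mset M"
  by (metis le_add1 sum_mset.remove)

lemma size_le_sum: "\<forall>n\<in>#M. 0 < (n::nat) \<Longrightarrow> size M \<le> sum_mset M"
  by (induction M) auto

lemma Par_sub: "Par d \<subseteq> (\<Union>n\<in>{0..d}. multisets_of_size {1..d} n)"
proof
  fix la assume "la \<in> Par d"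
  hence a: "\<forall>n\<in>#la. 0 < n" "sum_mset la = d" by (auto simp: Par_def)
  have "set_mset la \<subseteq> {1..d}" using a mem_le_sum by fastforce
  moreover have "size la \<le> d" using size_le_sum[OF a(1)] a(2) by simp
  ultimately show "la \<in> (\<Union>n\<in>{0..d}. multisets_of_size {1..d} n)"
    by (auto simp: multisets_of_size_def)
qed

lemma finite_Par: "finite (Par d)"
  by (rule finite_subset[OF Par_sub]) auto

lemma count_le: "la \<in> Par d \<Longrightarrow> count la k \<le> d"
proof -
  assume "la \<in> Par d"
  hence a: "\<forall>n\<in>#la. 0 < n" "sum_mset la = d" by (auto simp: Par_def)
  have "count la k \<le> size la" by (simp add: count_le_size)
  thus ?thesis using size_le_sum[OF a(1)] a(2) by simp
qed

lemma count_big: "la \<in> Par d \<Longrightarrow> d < m \<Longrightarrow> count la m = 0"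
  using mem_le_sum by (force simp: Par_def count_eq_zero_iff)

lemma count_zero: "la \<in> Par d \<Longrightarrow> count la 0 = 0"
  by (auto simp: Par_def count_eq_zero_iff)

lemma card_count_ge:
  assumes "k > 0"
  shows "card {la\<in>Par d. c \<le> count la k} = (if c*k \<le> d then card (Par (d - c*k)) else 0)"
proof (cases "c*k \<le> d")
  case True
  let ?R = "replicate_mset c k"
  have "bij_betw (\<lambda>mu. mu + ?R) (Par (d - c*k)) {la\<in>Par d. c \<le> count la k}"
  proof (rule bij_betw_byWitness[where f' = "\<lambda>la. la - ?R"])
    show "\<forall>a\<in>Par (d - c * k). a + ?R - ?R = a" by simp
    show "\<forall>a'\<in>{la \<in> Par d. c \<le> count la k}. a' - ?R + ?R = a'"
      by (auto intro!: subset_mset.diff_add simp: subseteq_mset_def)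
    show "(\<lambda>mu. mu + ?R) ` Par (d - c * k) \<subseteq> {la \<in> Par d. c \<le> count la k}"
      using True assms by (auto simp: Par_def sum_mset_replicate_mset split: if_splits)
    show "(\<lambda>la. la - ?R) ` {la \<in> Par d. c \<le> count la k} \<subseteq> Par (d - c * k)"
    proof safe
      fix la assume la: "la \<in> Par d" "c \<le> count la k"
      have sub: "?R \<subseteq># la" using la(2) by (simp add: subseteq_mset_def)
      have "sum_mset la = sum_mset (la - ?R) + sum_mset ?R"
        using sub by (metis subset_mset.diff_add sum_mset.union)
      thus "la - ?R \<in> Par (d - c*k)" using la(1)
        by (auto simp: Par_def sum_mset_replicate_mset dest: in_diffD)
    qed
  qed
  then show ?thesis using True by (simp add: bij_betw_same_card)
next
  case False
  have e: "{la\<in>Par d. c \<le> count la k} = {}"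
  proof safe
    fix la assume la: "la \<in> Par d" "c \<le> count la k"
    have sub: "replicate_mset c k \<subseteq># la" using la(2) by (simp add: subseteq_mset_def)
    hence "sum_mset (replicate_mset c k) \<le> sum_mset la"
      by (metis le_add2 subset_mset.diff_add sum_mset.union)
    thus "la \<in> {}" using la(1) False by (simp add: Par_def sum_mset_replicate_mset)
  qed
  show ?thesis using False by (subst e) simp
qed

lemma div_as_sum:
  assumes "(a::nat) \<le> d" "t > 0"
  shows "a div t = (\<Sum>s\<in>{1..d}. if s*t \<le> a then 1 else 0)"
proof -
  have "{s\<in>{1..d}. s*t \<le> a} = {1..a div t}"
  proof safe
    fix s assume "s \<in> {1..d}" "s*t \<le> a" thus "s \<in> {1..a div t}"
      using assms(2) by (simp add: less_eq_div_iff_mult_less_eq)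
  next
    fix s assume s: "s \<in> {1..a div t}"
    hence "s \<le> a div t" by simp
    thus "s*t \<le> a" using assms(2) less_eq_div_iff_mult_less_eq by blast
    have "a div t \<le> d" using assms(1) div_le_dividend order_trans by blast
    thus "s \<in> {1..d}" using s by simp
  qed
  hence "(\<Sum>s\<in>{1..d}. if s*t \<le> a then 1 else 0) = card {1..a div t}"
    by (subst sum.inter_filter[symmetric]) simp_all
  thus ?thesis by simp
qed

lemma key_formula:
  assumes "k > 0" "t > 0"
  shows "(\<Sum>la\<in>Par d. count la k div t)
     = (\<Sum>s\<in>{1..d}. if s*t*k \<le> d then card (Par (d - s*t*k)) else 0)"
proof -
  have "(\<Sum>la\<in>Par d. count la k div t)
      = (\<Sum>la\<in>Par d. \<Sum>s\<in>{1..d}. if s*t \<le> count la k then 1 else 0)"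
    by (rule sum.cong[OF refl], rule div_as_sum[OF count_le assms(2)])
  also have "\<dots> = (\<Sum>s\<in>{1..d}. \<Sum>la\<in>Par d. if s*t \<le> count la k then 1 else 0)"
    by (rule sum.swap)
  also have "\<dots> = (\<Sum>s\<in>{1..d}. card {la\<in>Par d. s*t \<le> count la k})"
    by (rule sum.cong[OF refl])
       (subst sum.inter_filter[symmetric], simp_all add: finite_Par)
  also have "\<dots> = (\<Sum>s\<in>{1..d}. if s*t*k \<le> d then card (Par (d - s*t*k)) else 0)"
    by (rule sum.cong[OF refl]) (simp add: card_count_ge[OF assms(1)])
  finally show ?thesis .
qed

lemma key:
  assumes "k > 0" "t > 0"
  shows "(\<Sum>la\<in>Par d. count la k div t) = (\<Sum>la\<in>Par d. count la (t*k))"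
proof -
  have e: "\<And>s::nat. s*1*(t*k) = s*t*k" by (simp add: mult.assoc)
  show ?thesis using key_formula[OF assms, of d] key_formula[of "t*k" 1 d] assms unfolding e by simp
qed

lemma size_count_sum:
  assumes "set_mset M \<subseteq> A" "finite A"
  shows "size M = (\<Sum>m\<in>A. count M m)"
proof -
  have "size M = (\<Sum>m\<in>set_mset M. count M m)" by (simp add: size_multiset_overloaded_eq)
  also have "\<dots> = (\<Sum>m\<in>A. count M m)"
    by (rule sum.mono_neutral_left) (use assms in \<open>auto simp: count_eq_zero_iff\<close>)
  finally show ?thesis .
qed

lemma size_filter_sum:
  assumes "set_mset M \<subseteq> {1..(d::nat)}"
  shows "size (filter_mset P M) = (\<Sum>m\<in>{m\<in>{1..d}. P m}. count M m)"
proof -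
  have "size (filter_mset P M) = (\<Sum>m\<in>{m\<in>{1..d}. P m}. count (filter_mset P M) m)"
  proof (rule size_count_sum)
    show "finite {m \<in> {1..d}. P m}" by (rule finite_subset[of _ "{1..d}"]) auto
  qed (use assms in auto)
  also have "\<dots> = (\<Sum>m\<in>{m\<in>{1..d}. P m}. count M m)" by (rule sum.cong) auto
  finally show ?thesis .
qed

lemma mult_eq:
  assumes "prime (p::nat)" "\<not> p dvd n" "n > 0"
  shows "multiplicity p (p^i * n) = i"
proof -
  have "p \<noteq> 0" using assms(1) by auto
  hence "multiplicity p (p^i * n) = multiplicity p (p^i) + multiplicity p n"
    using assms by (intro prime_elem_multiplicity_mult_distrib) auto
  thus ?thesis using assms by (simp add: not_dvd_imp_multiplicity_0)
qed

lemma comp_mem: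
  assumes "prime (p::nat)" "\<forall>n\<in>#la. 0 < n" "x \<in># padic_comp p i la"
  shows "0 < x \<and> \<not> p dvd x \<and> p^i * x \<in># la"
proof -
  obtain y where y: "y \<in># la" "multiplicity p y = i" "x = y div p^i"
    using assms(3) by (auto simp: padic_comp_def)
  have y0: "y \<noteq> 0" using assms(2) y(1) by auto
  have nu: "\<not> is_unit p" using prime_gt_1_nat[OF assms(1)] by simp
  obtain z where z: "y = p ^ multiplicity p y * z" "\<not> p dvd z" using multiplicity_decompose'[OF y0 nu] by blast
  have "p > 0" using assms(1) prime_gt_0_nat by blast
  hence "x = z" using y z by simp
  moreover have "z > 0" using z assms(2) y(1) by (metis gr0I mult_0_right)
  ultimately show ?thesis using y z by auto
qed

lemma count_comp:
  assumes "prime (p::nat)" "\<forall>n\<in>#la. 0 < n" "n > 0"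
  shows "count (padic_comp p i la) n = (if p dvd n then 0 else count la (p^i*n))"
proof (cases "p dvd n")
  case True
  then show ?thesis using comp_mem[OF assms(1,2)] by (auto simp: count_eq_zero_iff)
next
  case False
  have "p > 0" using assms(1) prime_gt_0_nat by blast
  have xeq: "x = p^i*n" if x: "x \<in># filter_mset (\<lambda>n. multiplicity p n = i) la" "n = x div p ^ i" for x
  proof -
    have x0: "x \<noteq> 0" using assms(2) x(1) by auto
    have nu: "\<not> is_unit p" using prime_gt_1_nat[OF assms(1)] by simp
    obtain z where z: "x = p ^ multiplicity p x * z" "\<not> p dvd z" using multiplicity_decompose'[OF x0 nu] by blast
    have mi: "multiplicity p x = i" using x(1) by simp
    have xz: "x = p^i * z" using z(1) mi by simp
    have pi0: "p^i > 0" using \<open>p > 0\<close> by simp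
    have "x div p^i = z" unfolding xz using pi0 by simp
    hence "n = z" using x(2) by simp
    thus "x = p^i*n" using xz by simp
  qed
  have inset: "p ^ i * n \<in># filter_mset (\<lambda>n. multiplicity p n = i) la" if "p^i*n \<in># la"
    using that mult_eq[OF assms(1) False assms(3)] by simp
  have bk: "n = p ^ i * n div p ^ i" using \<open>p > 0\<close> by simp
  have S: "{x. x \<in># filter_mset (\<lambda>n. multiplicity p n = i) la \<and> n = x div p ^ i}
         = (if p^i*n \<in># la then {p^i*n} else {})"
  proof (rule set_eqI)
    fix x
    show "x \<in> {x. x \<in># filter_mset (\<lambda>n. multiplicity p n = i) la \<and> n = x div p ^ i}
         \<longleftrightarrow> x \<in> (if p^i*n \<in># la then {p^i*n} else {})"
    proof
      assume "x \<in> {x. x \<in># filter_mset (\<lambda>n. multiplicity p n = i) la \<and> n = x div p ^ i}"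
      hence h: "x \<in># filter_mset (\<lambda>n. multiplicity p n = i) la" "n = x div p ^ i" by auto
      have "x = p^i*n" by (rule xeq[OF h])
      moreover have "x \<in># la" using h(1) by simp
      ultimately show "x \<in> (if p^i*n \<in># la then {p^i*n} else {})" by simp
    next
      assume "x \<in> (if p^i*n \<in># la then {p^i*n} else {})"
      hence "p^i*n \<in># la" "x = p^i*n" by (auto split: if_splits)
      thus "x \<in> {x. x \<in># filter_mset (\<lambda>n. multiplicity p n = i) la \<and> n = x div p ^ i}"
        using inset bk by simp
    qed
  qed
  have "count (padic_comp p i la) n
      = (\<Sum>x\<in>{x. x \<in># filter_mset (\<lambda>n. multiplicity p n = i) la \<and> n = x div p ^ i}.
           count (filter_mset (\<lambda>n. multiplicity p n = i) la) x)"
    unfolding padic_comp_def count_image_mset' by (rule refl)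
  also have "\<dots> = (\<Sum>x\<in>(if p^i*n \<in># la then {p^i*n} else {}).
           count (filter_mset (\<lambda>n. multiplicity p n = i) la) x)"
    by (simp only: S)
  also have "\<dots> = count la (p^i*n)"
    using mult_eq[OF assms(1) False assms(3)] by (simp add: not_in_iff)
  finally show ?thesis using False by simp
qed

lemma size_step:
  "size (filter_mset (\<lambda>m. i \<le> f m) M) = size (filter_mset (\<lambda>m. f m = i) M) + size (filter_mset (\<lambda>m. Suc i \<le> f m) M)"
  by (induction M) auto

lemma len_decomp:
  "size la = (\<Sum>i<r. len (padic_comp p i la)) + size (filter_mset (\<lambda>m. r \<le> multiplicity p m) la)"
proof (induction r)
  case 0
  then show ?case by simp
next
  case (Suc r)
  then show ?case using size_step[of r "multiplicity p" la]
    by (simp add: len_def padic_comp_def)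
qed

lemma dp_nat_sum:
  assumes "prime (p::nat)" "a \<le> d"
  shows "dp_nat p a = (\<Sum>j\<in>{1..d}. a div p^j)"
  unfolding dp_nat_def
proof (rule sum.mono_neutral_left)
  show "finite {1..d}" by simp
  show "{j. 1 \<le> j \<and> 0 < a div p ^ j} \<subseteq> {1..d}"
  proof safe
    fix j assume j: "1 \<le> j" "0 < a div p ^ j"
    have p2: "2 \<le> p" using assms(1) prime_ge_2_nat by blast
    have "j < 2^j" by (rule less_exp)
    also have "\<dots> \<le> p^j" using p2 by (simp add: power_mono)
    also have "p^j \<le> a" using j(2) by (metis div_eq_0_iff less_irrefl not_less)
    finally show "j \<in> {1..d}" using j assms(2) by simp
  qed
  show "\<forall>i\<in>{1..d} - {j. 1 \<le> j \<and> 0 < a div p ^ j}. a div p ^ i = 0" by auto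
qed

lemma dp_nat_0: "dp_nat p 0 = 0" by (simp add: dp_nat_def)

lemma dp_part_sum:
  assumes "set_mset mu \<subseteq> {1..d}"
  shows "dp_part p mu = (\<Sum>n\<in>{1..d}. dp_nat p (count mu n))"
  unfolding dp_part_def mult_part_def
  by (rule sum.mono_neutral_left) (use assms in \<open>auto simp: not_in_iff dp_nat_0\<close>)


lemma Par_pos: "la \<in> Par d \<Longrightarrow> \<forall>n\<in>#la. 0 < n" by (simp add: Par_def)

lemma Par_set: "la \<in> Par d \<Longrightarrow> set_mset la \<subseteq> {1..d}"
  using mem_le_sum by (fastforce simp: Par_def)

lemma D_formula:
  assumes "prime p" "r \<ge> 1" "la \<in> Par d"
  shows "dp_part p (padic_comp p (r-1) la)
       = (\<Sum>n\<in>{n\<in>{1..d}. \<not> p dvd n}. \<Sum>j\<in>{1..d}. count la (p^(r-1)*n) div p^j)"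
proof -
  have pos: "\<forall>n\<in>#la. 0 < n" using Par_pos[OF assms(3)] .
  have setc: "set_mset (padic_comp p (r-1) la) \<subseteq> {1..d}"
  proof
    fix x assume "x \<in># padic_comp p (r-1) la"
    from comp_mem[OF assms(1) pos this] have x: "0 < x" "p^(r-1)*x \<in># la" by auto
    have "p^(r-1)*x \<le> d" using Par_set[OF assms(3)] x(2) by auto
    moreover have "x \<le> p^(r-1)*x"
    proof -
      have "1 \<le> p^(r-1)" using prime_ge_1_nat[OF assms(1)] by (rule one_le_power)
      thus ?thesis by (metis mult_le_mono1 mult_1)
    qed
    ultimately have "x \<le> d" by linarith
    thus "x \<in> {1..d}" using x(1) by simp
  qed
  have "dp_part p (padic_comp p (r-1) la) = (\<Sum>n\<in>{1..d}. dp_nat p (count (padic_comp p (r-1) la) n))"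
    by (rule dp_part_sum[OF setc])
  also have "\<dots> = (\<Sum>n\<in>{1..d}. if \<not> p dvd n then dp_nat p (count la (p^(r-1)*n)) else 0)"
    by (rule sum.cong[OF refl]) (simp add: count_comp[OF assms(1) pos] dp_nat_0)
  also have "\<dots> = (\<Sum>n\<in>{n\<in>{1..d}. \<not> p dvd n}. dp_nat p (count la (p^(r-1)*n)))"
    by (rule sum.inter_filter[symmetric]) simp
  also have "\<dots> = (\<Sum>n\<in>{n\<in>{1..d}. \<not> p dvd n}. \<Sum>j\<in>{1..d}. count la (p^(r-1)*n) div p^j)"
    by (rule sum.cong[OF refl]) (rule dp_nat_sum[OF assms(1) count_le[OF assms(3)]])
  finally show ?thesis .
qed

theorem mainTheorem4:
  fixes p r d :: nat
  assumes "prime p" and "r \<ge> 1"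
  shows "(\<Sum>la\<in>Par d. (\<Sum>i<r. len (padic_comp p i la)) + dp_part p (padic_comp p (r - 1) la))
         = len_total d"
proof -
  define N where "N = {n\<in>{1..d}. \<not> p dvd n}"
  define J where "J = {1..(d::nat)}"
  define T where "T = {m\<in>{1..d}. r \<le> multiplicity p m}"
  define G where "G m = (\<Sum>la\<in>Par d. count la m)" for m
  define h where "h = (\<lambda>(n,j). p^j*(p^(r-1)*(n::nat)))"
  have p0: "p > 0" using assms(1) prime_gt_0_nat by blast
  have finN: "finite N" and finJ: "finite J" and finT: "finite T"
    unfolding N_def J_def T_def by simp_all
  have L: "(\<Sum>la\<in>Par d. dp_part p (padic_comp p (r - 1) la)) = (\<Sum>n\<in>N. \<Sum>j\<in>J. G (p^j*(p^(r-1)*n)))"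
  proof -
    have "(\<Sum>la\<in>Par d. dp_part p (padic_comp p (r - 1) la))
        = (\<Sum>la\<in>Par d. \<Sum>n\<in>N. \<Sum>j\<in>J. count la (p^(r-1)*n) div p^j)"
      unfolding N_def J_def by (rule sum.cong[OF refl]) (rule D_formula[OF assms])
    also have "\<dots> = (\<Sum>n\<in>N. \<Sum>la\<in>Par d. \<Sum>j\<in>J. count la (p^(r-1)*n) div p^j)"
      by (rule sum.swap)
    also have "\<dots> = (\<Sum>n\<in>N. \<Sum>j\<in>J. \<Sum>la\<in>Par d. count la (p^(r-1)*n) div p^j)"
      by (rule sum.cong[OF refl]) (rule sum.swap)
    also have "\<dots> = (\<Sum>n\<in>N. \<Sum>j\<in>J. G (p^j*(p^(r-1)*n)))"
    proof (intro sum.cong[OF refl])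
      fix n j assume "n \<in> N" "j \<in> J"
      hence "p^(r-1)*n > 0" using p0 by (simp add: N_def)
      thus "(\<Sum>la\<in>Par d. count la (p^(r-1)*n) div p^j) = G (p^j*(p^(r-1)*n))"
        unfolding G_def using key[of "p^(r-1)*n" "p^j" d] p0 by simp
    qed
    finally show ?thesis .
  qed
  have R: "(\<Sum>la\<in>Par d. size (filter_mset (\<lambda>m. r \<le> multiplicity p m) la)) = (\<Sum>m\<in>T. G m)"
  proof -
    have "(\<Sum>la\<in>Par d. size (filter_mset (\<lambda>m. r \<le> multiplicity p m) la))
        = (\<Sum>la\<in>Par d. \<Sum>m\<in>T. count la m)"
      unfolding T_def by (rule sum.cong[OF refl]) (rule size_filter_sum[OF Par_set])
    also have "\<dots> = (\<Sum>m\<in>T. G m)" unfolding G_def by (rule sum.swap)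
    finally show ?thesis .
  qed
  have inj: "inj_on h (N \<times> J)"
  proof (rule inj_onI)
    fix x y assume a0: "x \<in> N \<times> J" "y \<in> N \<times> J" "h x = h y"
    obtain n j where xe: "x = (n,j)" by (cases x)
    obtain n' j' where ye: "y = (n',j')" by (cases y)
    have a: "(n,j) \<in> N \<times> J" "(n',j') \<in> N \<times> J" "h (n,j) = h (n',j')" using a0 xe ye by auto
    have e1: "h (n,j) = p^(j + (r-1)) * n" "h (n',j') = p^(j' + (r-1)) * n'"
      by (simp_all add: h_def power_add mult.assoc)
    have "multiplicity p (h (n,j)) = j + (r-1)" using a(1) e1(1) mult_eq[OF assms(1)] by (simp add: N_def)
    moreover have "multiplicity p (h (n',j')) = j' + (r-1)" using a(2) e1(2) mult_eq[OF assms(1)] by (simp add: N_def)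
    ultimately have "j = j'" using a(3) by simp
    hence "n = n'" using a(3) e1 p0 by simp
    thus "x = y" using xe ye \<open>j = j'\<close> by simp
  qed
  have sub: "T \<subseteq> h ` (N \<times> J)"
  proof
    fix m assume m: "m \<in> T"
    hence m1: "1 \<le> m" "m \<le> d" "r \<le> multiplicity p m" by (auto simp: T_def)
    have m0: "m \<noteq> 0" using m1 by simp
    have nu: "\<not> is_unit p" using prime_gt_1_nat[OF assms(1)] by simp
    obtain z where z: "m = p ^ multiplicity p m * z" "\<not> p dvd z" using multiplicity_decompose'[OF m0 nu] by blast
    define v where "v = multiplicity p m"
    define j where "j = v - (r-1)"
    have vj: "v = j + (r-1)" using m1(3) assms(2) by (simp add: j_def v_def)
    have z0: "z > 0" using z m0 by (metis gr0I mult_0_right)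
    have "z \<le> m" using z0 z(1) p0 by (metis dvd_imp_le dvd_triv_right m0 not_gr0)
    hence zN: "z \<in> N" using z0 z(2) m1 by (simp add: N_def)
    have "v < 2^v" by (rule less_exp)
    also have "\<dots> \<le> p^v" using prime_ge_2_nat[OF assms(1)] by (simp add: power_mono)
    also have "p^v \<le> m" using z(1) z0 p0 unfolding v_def by (metis dvd_imp_le dvd_triv_left m0 not_gr0)
    finally have vm: "v < m" .
    have "1 \<le> j" using m1(3) assms(2) by (simp add: j_def v_def)
    moreover have "j \<le> d" using vm vj m1(2) by linarith
    ultimately have "j \<in> J" unfolding J_def by simp
    moreover have "h (z,j) = m" using z(1) vj unfolding h_def v_def by (simp add: power_add mult.assoc mult.commute)
    ultimately show "m \<in> h ` (N \<times> J)" using zN by (metis SigmaI image_eqI)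
  qed
  have reidx: "(\<Sum>n\<in>N. \<Sum>j\<in>J. G (p^j*(p^(r-1)*n))) = (\<Sum>m\<in>T. G m)"
  proof -
    have "(\<Sum>n\<in>N. \<Sum>j\<in>J. G (p^j*(p^(r-1)*n))) = (\<Sum>x\<in>N \<times> J. G (h x))"
      unfolding h_def by (simp add: sum.cartesian_product case_prod_beta)
    also have "\<dots> = (\<Sum>m\<in>h ` (N \<times> J). G m)"
      by (rule sum.reindex[OF inj, symmetric, unfolded comp_def])
    also have "\<dots> = (\<Sum>m\<in>T. G m)"
    proof (rule sum.mono_neutral_right)
      show "finite (h ` (N \<times> J))" using finN finJ by simp
      show "T \<subseteq> h ` (N \<times> J)" by (rule sub)
      show "\<forall>m\<in>h ` (N \<times> J) - T. G m = 0"
      proof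
        fix m assume "m \<in> h ` (N \<times> J) - T"
        then obtain n j where nj: "n \<in> N" "j \<in> J" "m = h (n,j)" "m \<notin> T" by auto
        have e: "m = p^(j + (r-1)) * n" using nj(3) by (simp add: h_def power_add mult.assoc)
        have n0: "n > 0" "\<not> p dvd n" using nj(1) by (auto simp: N_def)
        have mm: "multiplicity p m = j + (r-1)" using e mult_eq[OF assms(1) n0(2) n0(1)] by simp
        have "m > 0" using e n0 p0 by simp
        moreover have "r \<le> multiplicity p m" using mm nj(2) assms(2) unfolding J_def by (simp; arith)
        ultimately have "d < m" using nj(4) by (simp add: T_def)
        thus "G m = 0" unfolding G_def by (simp add: count_big)
      qed
    qed
    finally show ?thesis .
  qed
  have "(\<Sum>la\<in>Par d. (\<Sum>i<r. len (padic_comp p i la)) + dp_part p (padic_comp p (r - 1) la))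
      = (\<Sum>la\<in>Par d. \<Sum>i<r. len (padic_comp p i la)) + (\<Sum>la\<in>Par d. dp_part p (padic_comp p (r - 1) la))"
    by (rule sum.distrib)
  also have "\<dots> = (\<Sum>la\<in>Par d. \<Sum>i<r. len (padic_comp p i la)) + (\<Sum>la\<in>Par d. size (filter_mset (\<lambda>m. r \<le> multiplicity p m) la))"
    using L R reidx by simp
  also have "\<dots> = (\<Sum>la\<in>Par d. (\<Sum>i<r. len (padic_comp p i la)) + size (filter_mset (\<lambda>m. r \<le> multiplicity p m) la))"
    by (rule sum.distrib[symmetric])
  also have "\<dots> = len_total d"
    unfolding len_total_def len_def[of la for la] by (rule sum.cong[OF refl]) (rule len_decomp[symmetric, unfolded len_def])
  finally show ?thesis .
qed

end
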